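(* Let $n\ge2$ and let $A=(a_{ij})$ be an $n\times n$ nonnegative irreducible matrix with all diagonal entries $0$ and row sums $r_1\ge r_2\ge\cdots\ge r_n$. Let $N=\max_{i\ne j}a_{ij}$ and assume $N>0$. Then for $1\le i\le n$, \[\rho(A)\le \frac{r_i-N+\sqrt{(r_i+N)^2+4N\sum_{k=1}^{i-1}(r_k-r_i)}}{2}.\] Equality holds if and only if $r_1=\cdots=r_n$, or for some $2\le t\le i$: (i) $a_{kl}=N$ for all $1\le k\le n$, $1\le l\le t-1$, $k\ne l$; (ii) $r_t=\cdots=r_n$.
   Context: $\rho(A)$ denotes the spectral radius of $A$. An empty sum equals $0$. *)

theory Defs
  imports "Jordan_Normal_Form.Spectral_Radius"
begin

definition nonneg_mat :: "real mat \<Rightarrow> bool" where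
  "nonneg_mat A \<longleftrightarrow> (\<forall>i<dim_row A. \<forall>j<dim_col A. A $$ (i,j) \<ge> 0)"

(* A square matrix of order n is reducible iff (for n = 1: it is zero; for n \<ge> 2:)
   there is a permutation P with P^T A P block upper triangular, which is the same as a
   nonempty proper index set S with a_ij = 0 for i in S, j not in S.
   We only use it for n \<ge> 2. *)
definition irreducible_mat :: "real mat \<Rightarrow> bool" where
  "irreducible_mat A \<longleftrightarrow>
     \<not> (\<exists>S. S \<noteq> {} \<and> S \<subset> {..<dim_row A} \<and>
            (\<forall>i\<in>S. \<forall>j\<in>{..<dim_row A} - S. A $$ (i,j) = 0))"

definition row_sum :: "real mat \<Rightarrow> nat \<Rightarrow> real" where
  "row_sum A i = (\<Sum>j<dim_col A. A $$ (i,j))"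

definition rho :: "real mat \<Rightarrow> real" where
  "rho A = spectral_radius (map_mat complex_of_real A)"

end

theory Submission
  imports Defs
begin

lemma ev_exists:
  assumes A: "A \<in> carrier_mat n n" and n: "n>0"
  shows "\<exists>lam v. cmod lam = rho A \<and> (\<forall>k<n. (\<Sum>l<n. complex_of_real (A$$(k,l)) * v l) = lam * v k) \<and> (\<exists>k<n. v k \<noteq> 0)"
proof -
  let ?B = "map_mat complex_of_real A"
  have B: "?B \<in> carrier_mat n n" using A by simp
  from spectral_radius_mem_max(1)[OF B n] obtain lam where l: "lam \<in> spectrum ?B" "rho A = cmod lam"
    unfolding rho_def by auto
  then obtain w where ev: "eigenvector ?B w lam" unfolding spectrum_def eigenvalue_def by auto
  hence w: "w \<in> carrier_vec n" "w \<noteq> 0\<^sub>v n" "?B *\<^sub>v w = lam \<cdot>\<^sub>v w" using A unfolding eigenvector_def by auto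
  show ?thesis
  proof (intro exI[of _ lam] exI[of _ "\<lambda>l. w$l"] conjI allI impI)
    show "cmod lam = rho A" using l by simp
  next
    fix k assume k: "k<n"
    have "(?B *\<^sub>v w) $ k = lam * w $ k" using w k by simp
    moreover have "(?B *\<^sub>v w) $ k = (\<Sum>l<n. complex_of_real (A$$(k,l)) * w $ l)"
      using A k w(1) by (simp add: scalar_prod_def lessThan_atLeast0)
    ultimately show "(\<Sum>l<n. complex_of_real (A$$(k,l)) * w $ l) = lam * w $ k" by simp
  next
    show "\<exists>k<n. w $ k \<noteq> 0"
    proof (rule ccontr)
      assume "\<not> ?thesis"
      hence "w = 0\<^sub>v n" using w(1) by (intro eq_vecI) auto
      thus False using w(2) by simp
    qed
  qed
qed

lemma ev_lower:
  assumes A: "A \<in> carrier_mat n n" and n: "n>0"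
    and x: "\<exists>k<n. x k \<noteq> 0"
    and eq: "\<forall>k<n. (\<Sum>l<n. A$$(k,l) * x l) = c * x k"
  shows "c \<le> rho A"
proof -
  let ?B = "map_mat complex_of_real A"
  have B: "?B \<in> carrier_mat n n" using A by simp
  let ?w = "vec n (\<lambda>k. complex_of_real (x k))"
  have "?B *\<^sub>v ?w = complex_of_real c \<cdot>\<^sub>v ?w"
  proof (rule eq_vecI)
    fix k assume "k < dim_vec (complex_of_real c \<cdot>\<^sub>v ?w)"
    hence k: "k<n" by simp
    have "(?B *\<^sub>v ?w) $ k = (\<Sum>l<n. complex_of_real (A$$(k,l) * x l))"
      using A k by (simp add: scalar_prod_def lessThan_atLeast0)
    also have "\<dots> = complex_of_real (\<Sum>l<n. A$$(k,l) * x l)" by simp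
    also have "\<dots> = complex_of_real (c * x k)" using eq k by simp
    finally show "(?B *\<^sub>v ?w) $ k = (complex_of_real c \<cdot>\<^sub>v ?w) $ k" using k by simp
  qed (use A in simp)
  moreover have "?w \<noteq> 0\<^sub>v n"
  proof
    assume "?w = 0\<^sub>v n"
    then have "\<forall>k<n. x k = 0" by (metis index_vec index_zero_vec(1) of_real_eq_0_iff)
    thus False using x by auto
  qed
  ultimately have "eigenvector ?B ?w (complex_of_real c)" using A unfolding eigenvector_def by auto
  hence "complex_of_real c \<in> spectrum ?B" unfolding spectrum_def eigenvalue_def by auto
  hence "cmod (complex_of_real c) \<le> rho A" unfolding rho_def
    by (intro spectral_radius_mem_max(2)[OF B n]) (metis image_eqI)
  thus ?thesis by simp
qed

lemma bound_lemma:
  assumes A: "A \<in> carrier_mat n n" and n: "n>0"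
    and nn: "\<forall>k<n. \<forall>l<n. A$$(k,l) \<ge> 0"
    and xpos: "\<forall>k<n. x k > 0"
    and le: "\<forall>k<n. (\<Sum>l<n. A$$(k,l) * x l) \<le> c * x k"
  shows "rho A \<le> c \<and> (irreducible_mat A \<and> rho A = c \<longrightarrow> (\<forall>k<n. (\<Sum>l<n. A$$(k,l) * x l) = c * x k))"
proof -
  obtain lam v where lv: "cmod lam = rho A" "\<forall>k<n. (\<Sum>l<n. complex_of_real (A$$(k,l)) * v l) = lam * v k" "\<exists>k<n. v k \<noteq> 0"
    using ev_exists[OF A n] by blast
  define m where "m = Max ((\<lambda>k. cmod (v k) / x k) ` {..<n})"
  have fin: "finite ((\<lambda>k. cmod (v k) / x k) ` {..<n})" by simp
  have mge: "cmod (v l) \<le> m * x l" if "l<n" for l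
  proof -
    have "cmod (v l)/x l \<le> m" unfolding m_def using that by (intro Max_ge) auto
    thus ?thesis using xpos that by (simp add: pos_divide_le_eq)
  qed
  have "m \<in> (\<lambda>k. cmod (v k) / x k) ` {..<n}"
    unfolding m_def using n by (intro Max_in[OF fin]) auto
  then obtain k0 where k0: "k0<n" "m = cmod (v k0) / x k0" by auto
  have mpos: "m > 0"
  proof -
    obtain k where k: "k<n" "v k \<noteq> 0" using lv(3) by auto
    have "0 < cmod (v k)" using k by simp
    also have "\<dots> \<le> m * x k" using mge k by simp
    finally have "0 < m * x k" .
    thus ?thesis using xpos k by (metis zero_less_mult_pos2)
  qed
  have k0v: "cmod (v k0) = m * x k0" using k0 xpos[rule_format, OF k0(1)] by simp
  have key1: "rho A * cmod (v k) \<le> (\<Sum>l<n. A$$(k,l) * cmod (v l))" if "k<n" for k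
  proof -
    have "rho A * cmod (v k) = cmod (lam * v k)" using lv(1) by (simp add: norm_mult)
    also have "\<dots> = cmod (\<Sum>l<n. complex_of_real (A$$(k,l)) * v l)" using lv(2) that by simp
    also have "\<dots> \<le> (\<Sum>l<n. cmod (complex_of_real (A$$(k,l)) * v l))" by (rule norm_sum)
    also have "\<dots> = (\<Sum>l<n. A$$(k,l) * cmod (v l))" using nn that by (intro sum.cong) (auto simp: norm_mult)
    finally show ?thesis .
  qed
  have key2: "(\<Sum>l<n. A$$(k,l) * cmod (v l)) \<le> m * (\<Sum>l<n. A$$(k,l) * x l)" if "k<n" for k
  proof -
    have "(\<Sum>l<n. A$$(k,l) * cmod (v l)) \<le> (\<Sum>l<n. A$$(k,l) * (m * x l))"
      using nn that mge by (intro sum_mono mult_left_mono) auto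
    also have "\<dots> = m * (\<Sum>l<n. A$$(k,l) * x l)" by (simp add: sum_distrib_left algebra_simps)
    finally show ?thesis .
  qed
  have key3: "m * (\<Sum>l<n. A$$(k,l) * x l) \<le> m * (c * x k)" if "k<n" for k
    using le that mpos by simp
  have part1: "rho A \<le> c"
  proof -
    have "rho A * (m * x k0) \<le> c * (m * x k0)"
      using key1[OF k0(1)] key2[OF k0(1)] key3[OF k0(1)] k0v by (simp add: algebra_simps)
    moreover have "m * x k0 > 0" using mpos xpos[rule_format, OF k0(1)] by simp
    ultimately show ?thesis using mult_right_le_imp_le by blast
  qed
  moreover have "(\<forall>k<n. (\<Sum>l<n. A$$(k,l) * x l) = c * x k)" if irr: "irreducible_mat A" and eq: "rho A = c"
  proof -
    define M where "M = {k. k<n \<and> cmod (v k) = m * x k}"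
    have inM: "(\<Sum>l<n. A$$(k,l) * x l) = c * x k \<and> (\<forall>l\<in>{..<n} - M. A$$(k,l) = 0)" if "k \<in> M" for k
    proof -
      have k: "k<n" "cmod (v k) = m * x k" using that M_def by auto
      have e1: "c * (m * x k) \<le> (\<Sum>l<n. A$$(k,l) * cmod (v l))" using key1[OF k(1)] k eq by simp
      have e2: "(\<Sum>l<n. A$$(k,l) * cmod (v l)) = m * (\<Sum>l<n. A$$(k,l) * x l)"
        using e1 key2[OF k(1)] key3[OF k(1)] mult.left_commute[of m c "x k"] by linarith
      have e3: "m * (\<Sum>l<n. A$$(k,l) * x l) = m * (c * x k)"
        using e1 key2[OF k(1)] key3[OF k(1)] mult.left_commute[of m c "x k"] by linarith
      have "(\<Sum>l<n. A$$(k,l) * (m * x l - cmod (v l))) = (\<Sum>l<n. m * (A$$(k,l) * x l) - A$$(k,l) * cmod (v l))"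
        by (intro sum.cong) (auto simp: algebra_simps)
      also have "\<dots> = m * (\<Sum>l<n. A$$(k,l) * x l) - (\<Sum>l<n. A$$(k,l) * cmod (v l))"
        by (simp add: sum_subtractf sum_distrib_left)
      finally have s0: "(\<Sum>l<n. A$$(k,l) * (m * x l - cmod (v l))) = 0"
        using e2 by simp
      have s1: "\<forall>l\<in>{..<n}. A$$(k,l) * (m * x l - cmod (v l)) \<ge> 0"
      proof
        fix l assume l: "l \<in> {..<n}"
        show "A$$(k,l) * (m * x l - cmod (v l)) \<ge> 0"
          using nn k l mge[of l] by (intro mult_nonneg_nonneg) auto
      qed
      have z: "\<forall>l\<in>{..<n}. A$$(k,l) * (m * x l - cmod (v l)) = 0"
        using sum_nonneg_eq_0_iff[OF finite_lessThan s1[rule_format]] s0 by simp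
      have "\<forall>l\<in>{..<n} - M. A$$(k,l) = 0"
      proof
        fix l assume l: "l \<in> {..<n} - M"
        hence l1: "l < n" "cmod (v l) \<noteq> m * x l" using M_def by auto
        hence "m * x l - cmod (v l) > 0" using mge[of l] by linarith
        moreover have "A$$(k,l) * (m * x l - cmod (v l)) = 0" using z l1(1) by blast
        ultimately show "A$$(k,l) = 0" by simp
      qed
      moreover have "(\<Sum>l<n. A$$(k,l) * x l) = c * x k" using e3 mpos by simp
      ultimately show ?thesis by simp
    qed
    have "M = {..<n}"
    proof (rule ccontr)
      assume "M \<noteq> {..<n}"
      moreover have "M \<subseteq> {..<n}" unfolding M_def by blast
      moreover have "k0 \<in> M" unfolding M_def using k0(1) k0v by blast
      hence "M \<noteq> {}" by blast
      moreover have "dim_row A = n" using A by simp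
      moreover have "\<forall>i\<in>M. \<forall>j\<in>{..<n} - M. A $$ (i,j) = 0" using inM by blast
      ultimately have "M \<noteq> {} \<and> M \<subset> {..<dim_row A} \<and> (\<forall>i\<in>M. \<forall>j\<in>{..<dim_row A} - M. A $$ (i,j) = 0)"
        by auto
      thus False using irr unfolding irreducible_mat_def by blast
    qed
    show ?thesis
    proof (intro allI impI)
      fix k assume "k<n"
      hence "k \<in> M" using \<open>M = {..<n}\<close> by blast
      thus "(\<Sum>l<n. A$$(k,l) * x l) = c * x k" using inM by blast
    qed
  qed
  ultimately show ?thesis by blast
qed

theorem corollary2:
  fixes A :: "real mat" and n :: nat and N :: real
  assumes "n \<ge> 2"
    and "A \<in> carrier_mat n n"
    and "nonneg_mat A"
    and "irreducible_mat A"
    and "\<forall>k<n. A $$ (k,k) = 0"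
    and "\<forall>k l. k \<le> l \<and> l < n \<longrightarrow> row_sum A l \<le> row_sum A k"
    and "N = Max {A $$ (k,l) | k l. k < n \<and> l < n \<and> k \<noteq> l}"
    and "N > 0"
  shows "\<forall>i<n.
     rho A \<le> (row_sum A i - N + sqrt ((row_sum A i + N)\<^sup>2
                 + 4 * N * (\<Sum>k<i. row_sum A k - row_sum A i))) / 2
   \<and> (rho A = (row_sum A i - N + sqrt ((row_sum A i + N)\<^sup>2
                 + 4 * N * (\<Sum>k<i. row_sum A k - row_sum A i))) / 2
      \<longleftrightarrow> (\<forall>k<n. row_sum A k = row_sum A 0)
          \<or> (\<exists>t. 1 \<le> t \<and> t \<le> i
                 \<and> (\<forall>k<n. \<forall>l<t. k \<noteq> l \<longrightarrow> A $$ (k,l) = N)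
                 \<and> (\<forall>k. t \<le> k \<and> k < n \<longrightarrow> row_sum A k = row_sum A t)))"
proof (intro allI impI)
  fix i assume i: "i < n"
  note n2 = assms(1) and Ac = assms(2) and diag = assms(5) and Npos = assms(8)
  have n: "n > 0" using n2 by simp
  have nn: "\<forall>k<n. \<forall>l<n. A$$(k,l) \<ge> 0" using assms(3) Ac unfolding nonneg_mat_def by auto
  define r where "r = row_sum A"
  have r_eq: "r k = (\<Sum>l<n. A$$(k,l))" for k using Ac unfolding r_def row_sum_def by simp
  have mono: "r l \<le> r k" if "k \<le> l" "l < n" for k l using assms(6) that unfolding r_def by blast
  have le_N: "A$$(k,l) \<le> N" if "k<n" "l<n" "k\<noteq>l" for k l
  proof -
    have sub: "{A $$ (k,l) | k l. k < n \<and> l < n \<and> k \<noteq> l} \<subseteq> (\<lambda>(k,l). A$$(k,l)) ` ({..<n}\<times>{..<n})"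
      by auto
    have "finite {A $$ (k,l) | k l. k < n \<and> l < n \<and> k \<noteq> l}"
      by (rule finite_subset[OF sub]) simp
    moreover have "A$$(k,l) \<in> {A $$ (k,l) | k l. k < n \<and> l < n \<and> k \<noteq> l}" using that by blast
    ultimately show ?thesis unfolding assms(7) by (rule Max_ge)
  qed
  define S where "S = (\<Sum>k<i. r k - r i)"
  have S0: "S \<ge> 0" unfolding S_def using mono i by (intro sum_nonneg) auto
  have ri0: "r i \<ge> 0" unfolding r_eq using nn i by (intro sum_nonneg) auto
  define q where "q = sqrt ((r i + N)^2 + 4*N*S)"
  define \<rho> where "\<rho> = (r i - N + q)/2"
  have rad: "(r i + N)^2 + 4*N*S \<ge> 0" using S0 Npos by simp
  have q2: "q^2 = (r i + N)^2 + 4*N*S" unfolding q_def using rad by simp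
  have q_ge: "q \<ge> r i + N" unfolding q_def using S0 Npos by (intro real_le_rsqrt) simp
  have \<rho>N: "\<rho> + N > 0" unfolding \<rho>_def using q_ge ri0 Npos by (simp add: field_simps)
  have \<rho>ri: "\<rho> \<ge> r i" unfolding \<rho>_def using q_ge by (simp add: field_simps)
  have quad0: "(\<rho> - r i) * (\<rho> + N) = N * S"
  proof -
    have "(\<rho> - r i) * (\<rho> + N) = (q^2 - (r i + N)^2) / 4"
      unfolding \<rho>_def by (simp add: power2_eq_square field_simps)
    thus ?thesis using q2 by simp
  qed
  define d where "d l = (if l < i then (r l - r i)/(\<rho>+N) else 0)" for l
  define x where "x l = 1 + d l" for l
  define D where "D = (\<Sum>l<n. d l)"
  have d0: "d l \<ge> 0" for l
    unfolding d_def using mono[of l i] i \<rho>N by auto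
  have xpos: "\<forall>k<n. x k > 0" unfolding x_def using d0 by (simp add: add_pos_nonneg)
  have Dsum: "D = (\<Sum>l<i. d l)"
    unfolding D_def using i
    by (intro sum.mono_neutral_right) (auto simp: d_def)
  have D: "N * D = \<rho> - r i"
  proof -
    have "D = (\<Sum>l<i. (r l - r i)/(\<rho>+N))" unfolding Dsum d_def by simp
    also have "\<dots> = S / (\<rho>+N)" unfolding S_def by (simp add: sum_divide_distrib)
    finally have "N * D = N * S / (\<rho>+N)" by simp
    also have "\<dots> = \<rho> - r i" using quad0 \<rho>N by (simp add: field_simps)
    finally show ?thesis .
  qed
  define e where "e k = r k - r i - d k * (\<rho>+N)" for k
  define F where "F k = (\<Sum>l\<in>{..<n}-{k}. (N - A$$(k,l)) * d l)" for k
  have ident: "(\<Sum>l<n. A$$(k,l) * x l) = \<rho> * x k + e k - F k" if k: "k<n" for k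
  proof -
    have s1: "(\<Sum>l<n. A$$(k,l) * x l) = r k + (\<Sum>l<n. A$$(k,l) * d l)"
      unfolding x_def r_eq by (simp add: algebra_simps sum.distrib)
    have s2: "(\<Sum>l<n. A$$(k,l) * d l) = (\<Sum>l\<in>{..<n}-{k}. A$$(k,l) * d l)"
      using sum.remove[of "{..<n}" k "\<lambda>l. A$$(k,l) * d l"] k diag by simp
    have s3: "D = d k + (\<Sum>l\<in>{..<n}-{k}. d l)"
      unfolding D_def using sum.remove[of "{..<n}" k d] k by simp
    have s4: "F k = N * (\<Sum>l\<in>{..<n}-{k}. d l) - (\<Sum>l\<in>{..<n}-{k}. A$$(k,l) * d l)"
    proof -
      have "F k = (\<Sum>l\<in>{..<n}-{k}. N * d l - A$$(k,l) * d l)"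
        unfolding F_def by (intro sum.cong) (auto simp: left_diff_distrib)
      also have "\<dots> = (\<Sum>l\<in>{..<n}-{k}. N * d l) - (\<Sum>l\<in>{..<n}-{k}. A$$(k,l) * d l)"
        by (rule sum_subtractf)
      also have "(\<Sum>l\<in>{..<n}-{k}. N * d l) = N * (\<Sum>l\<in>{..<n}-{k}. d l)"
        by (rule sum_distrib_left[symmetric])
      finally show ?thesis .
    qed
    have s5: "(\<Sum>l<n. A$$(k,l) * x l) = r k + (\<Sum>l\<in>{..<n}-{k}. A$$(k,l) * d l)"
      using s1 s2 by simp
    have s6: "\<rho> * x k + e k - F k = \<rho> + \<rho> * d k + (r k - r i - d k * (\<rho>+N))
         - (N * (\<Sum>l\<in>{..<n}-{k}. d l) - (\<Sum>l\<in>{..<n}-{k}. A$$(k,l) * d l))"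
      unfolding s4 e_def x_def by (simp add: algebra_simps)
    show ?thesis unfolding s5 s6 using s3 D by (simp add: algebra_simps)
  qed
  have e_le: "e k \<le> 0" if "k<n" for k
  proof (cases "k < i")
    case True thus ?thesis unfolding e_def d_def using \<rho>N by simp
  next
    case False thus ?thesis unfolding e_def d_def using mono[of i k] that by simp
  qed
  have F_ge: "F k \<ge> 0" if "k<n" for k
    unfolding F_def using le_N[OF that] d0 by (intro sum_nonneg mult_nonneg_nonneg) auto
  have le: "\<forall>k<n. (\<Sum>l<n. A$$(k,l) * x l) \<le> \<rho> * x k"
  proof (intro allI impI)
    fix k assume k: "k<n"
    show "(\<Sum>l<n. A$$(k,l) * x l) \<le> \<rho> * x k" using ident[OF k] e_le[OF k] F_ge[OF k] by linarith
  qed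
  note BL = bound_lemma[OF Ac n nn xpos le]
  define P where "P = ((\<forall>k<n. r k = r 0)
          \<or> (\<exists>t. 1 \<le> t \<and> t \<le> i
                 \<and> (\<forall>k<n. \<forall>l<t. k \<noteq> l \<longrightarrow> A $$ (k,l) = N)
                 \<and> (\<forall>k. t \<le> k \<and> k < n \<longrightarrow> r k = r t)))"
  have main: "rho A \<le> \<rho> \<and> (rho A = \<rho> \<longleftrightarrow> P)"
  proof (intro conjI iffI)
    show "rho A \<le> \<rho>" using BL by blast
  next
    assume eq: "rho A = \<rho>"
    hence eqx: "\<forall>k<n. (\<Sum>l<n. A$$(k,l) * x l) = \<rho> * x k" using BL assms(4) by blast
    have ek: "e k = 0" and Fk: "F k = 0" if "k<n" for k
    proof -
      have "\<rho> * x k + e k - F k = \<rho> * x k" using ident[OF that] eqx that by simp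
      thus "e k = 0" "F k = 0" using e_le[OF that] F_ge[OF that] by linarith+
    qed
    have Fz: "(N - A$$(k,l)) * d l = 0" if "k<n" "l<n" "l\<noteq>k" for k l
    proof -
      have nng: "(N - A$$(k,l)) * d l \<ge> 0" if "l\<in>{..<n}-{k}" for l
        using le_N[OF \<open>k<n\<close>] d0 that by (auto intro: mult_nonneg_nonneg)
      from sum_nonneg_eq_0_iff[of "{..<n}-{k}" "\<lambda>l. (N - A$$(k,l)) * d l", OF _ nng] Fk[OF that(1)]
      have "\<forall>l\<in>{..<n}-{k}. (N - A$$(k,l)) * d l = 0" unfolding F_def by simp
      thus ?thesis using that by blast
    qed
    define t where "t = (LEAST l. r l = r i)"
    have rt: "r t = r i" unfolding t_def by (rule LeastI) simp
    have ti: "t \<le> i" unfolding t_def by (rule Least_le) simp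
    have colN: "A$$(k,l) = N" if "k<n" "l<t" "k\<noteq>l" for k l
    proof -
      have "r l \<noteq> r i" using that(2) not_less_Least unfolding t_def by blast
      moreover have "r l \<ge> r i" using mono[of l i] that ti i by simp
      ultimately have "d l > 0" unfolding d_def using that ti \<rho>N by simp
      thus ?thesis using Fz[of k l] that ti i by simp
    qed
    have rowt: "r k = r t" if "t \<le> k" "k<n" for k
    proof (cases "k \<le> i")
      case True
      have "r k \<le> r t" using mono[of t k] that by blast
      moreover have "r i \<le> r k" using mono[of k i] True i by blast
      ultimately show ?thesis using rt by linarith
    next
      case False
      hence "d k = 0" unfolding d_def by simp
      thus ?thesis using ek[OF that(2)] rt unfolding e_def by simp
    qed
    show P
    proof (cases "t = 0")
      case True
      have "\<forall>k<n. r k = r 0" using rowt True by (metis le0)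
      thus ?thesis unfolding P_def by (rule disjI1)
    next
      case False
      have "1 \<le> t \<and> t \<le> i \<and> (\<forall>k<n. \<forall>l<t. k \<noteq> l \<longrightarrow> A $$ (k,l) = N)
                 \<and> (\<forall>k. t \<le> k \<and> k < n \<longrightarrow> r k = r t)"
        using False ti colN rowt by (metis less_one not_le)
      thus ?thesis unfolding P_def by blast
    qed
  next
    assume P
    have ek: "e k = 0 \<and> F k = 0" if k: "k<n" for k
    proof (cases "\<forall>k<n. r k = r 0")
      case True
      have rr: "r l = r i" if "l<n" for l
      proof -
        have "r l = r 0" "r i = r 0" using True that i by blast+
        thus ?thesis by simp
      qed
      hence "d l = 0" if "l<n" for l using that unfolding d_def by simp
      hence "F k = 0" unfolding F_def by simp
      moreover have "e k = 0" unfolding e_def d_def using rr k by simp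
      ultimately show ?thesis by simp
    next
      case False
      then obtain t where t: "1 \<le> t" "t \<le> i" "\<forall>k<n. \<forall>l<t. k \<noteq> l \<longrightarrow> A $$ (k,l) = N"
          "\<forall>k. t \<le> k \<and> k < n \<longrightarrow> r k = r t" using \<open>P\<close> unfolding P_def by blast
      have rti: "r i = r t" using t(2,4) i by blast
      have "(N - A$$(k,l)) * d l = 0" if "l \<in> {..<n}-{k}" for l
      proof (cases "l < t")
        case True thus ?thesis using t(3) that k by auto
      next
        case False
        have "d l = 0"
        proof (cases "l < i")
          case True
          have "t \<le> l" "l < n" using False that by auto
          hence "r l = r t" using t(4) by blast
          thus ?thesis unfolding d_def using rti by simp
        qed (simp add: d_def)
        thus ?thesis by simp
      qed
      hence "F k = 0" unfolding F_def by (intro sum.neutral) blast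
      moreover have "e k = 0"
      proof (cases "k < i")
        case True thus ?thesis unfolding e_def d_def using \<rho>N by simp
      next
        case False
        hence "t \<le> k" using t(2) by simp
        hence "r k = r t" using t(4) k by blast
        thus ?thesis unfolding e_def d_def using False rti by simp
      qed
      ultimately show ?thesis by simp
    qed
    have "\<forall>k<n. (\<Sum>l<n. A$$(k,l) * x l) = \<rho> * x k" using ident ek by simp
    moreover have "\<exists>k<n. x k \<noteq> 0" using xpos n by force
    ultimately have "\<rho> \<le> rho A" using ev_lower[OF Ac n] by blast
    thus "rho A = \<rho>" using BL by linarith
  qed
  thus "rho A \<le> (row_sum A i - N + sqrt ((row_sum A i + N)\<^sup>2
                 + 4 * N * (\<Sum>k<i. row_sum A k - row_sum A i))) / 2
   \<and> (rho A = (row_sum A i - N + sqrt ((row_sum A i + N)\<^sup>2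
                 + 4 * N * (\<Sum>k<i. row_sum A k - row_sum A i))) / 2
      \<longleftrightarrow> (\<forall>k<n. row_sum A k = row_sum A 0)
          \<or> (\<exists>t. 1 \<le> t \<and> t \<le> i
                 \<and> (\<forall>k<n. \<forall>l<t. k \<noteq> l \<longrightarrow> A $$ (k,l) = N)
                 \<and> (\<forall>k. t \<le> k \<and> k < n \<longrightarrow> row_sum A k = row_sum A t)))"
    unfolding \<rho>_def q_def S_def P_def r_def .
qed

end
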